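(* Let $N\ge1$, $n\ge1$, $\beta>0$ real, and let $X^{(\beta,N)}_k$ ($k\in\mathcal L^{(1)}_n$) and $T^{(1)}_{ab}(\beta)$ be as in the context. Then: (i) for each $a=1,\dots,N$, $T^{(1)}_{aa}(\beta)X^{(\beta,N)}_k=\#\{i:\underline{k_i}=a\}\,X^{(\beta,N)}_k$; (ii) with $D=z_1\partial_{z_1}+\dots+z_n\partial_{z_n}$, $DX^{(\beta,N)}_k=|\overline{k}|\,X^{(\beta,N)}_k$, where $|\overline k|=\overline{k_1}+\dots+\overline{k_n}$.
   Context: For $k\in\mathbb Z$, $\underline{k}\in\{1,\dots,N\}$, $\overline{k}\in\mathbb Z$ unique with $k=\underline{k}-N\overline{k}$ (componentwise on sequences). Dominance order on $\mathbb Z^n$: distinct $k>l$ iff $\sum k_i=\sum l_i$ and $k_1+\dots+k_i\ge l_1+\dots+l_i$ for all $i$. $\mathcal L^{(1)}_n$ = strictly decreasing sequences in $\mathbb Z^n$. $V=\mathbb C^N$ (basis $v_a$, matrix units $E_{ab}$, $E^{(i)}_{ab}$ acting on the $i$-th factor of $V^{\otimes n}$). On $\mathbb C[z_1^{\pm1},\dots,z_n^{\pm1}]\otimes V^{\otimes n}$, $K_{ij}$ swaps $z_i,z_j$, $P_{ij}$ swaps factors $i,j$; $F_{N,n}=\{f:K_{ij}f=-P_{ij}f\}$, with basis $\hat u_k=\sum_{w\in S_n}\mathrm{sign}(w)z_1^{\overline{k_{w(1)}}}\cdots z_n^{\overline{k_{w(n)}}}\otimes v_{\underline{k_{w(1)}}}\otimes\cdots\otimes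 v_{\underline{k_{w(n)}}}$, $k\in\mathcal L^{(1)}_n$. $Y(\mathfrak{gl}_N)$ is generated by the coefficients of $T_{ab}(u)=\delta_{ab}+\sum_sT^{(s)}_{ab}u^{-s}$ with $(u-v)[T_{ab}(u),T_{cd}(v)]=T_{cb}(v)T_{ad}(u)-T_{cb}(u)T_{ad}(v)$; $A_m(u)=\sum_{w\in S_m}\mathrm{sign}(w)T_{1w(1)}(u)\cdots T_{mw(m)}(u-m+1)$. Let $d_i(\beta)=\beta^{-1}z_i\partial_{z_i}+n-i+\sum_{j>i}\frac{z_j}{z_j-z_i}(K_{ij}-1)-\sum_{j<i}\frac{z_i}{z_i-z_j}(K_{ij}-1)$, $L^{(i)}_{ab}(u)=\delta_{ab}+(u+d_i(\beta))^{-1}E^{(i)}_{ba}$ (expanded in $u^{-1}$) and $T_{ab}(u;\beta)=\sum_cL^{(1)}_{ac_1}(u)\cdots L^{(n)}_{c_{n-1}b}(u)$; this defines a $Y(\mathfrak{gl}_N)$-action on $F_{N,n}$, $A_m(u;\beta)$ is the image of $A_m(u)$, and $T^{(1)}_{ab}(\beta)$ is the coefficient of $u^{-1}$ in $T_{ab}(u;\beta)$ (equal to $\sum_iE^{(i)}_{ba}$). For $k\in\mathcal L^{(1)}_n$, $X^{(\beta,N)}_k$ is the unique common eigenvector of all coefficients of $A_1(u;\beta),\dots,A_N(u;\beta)$ of the form $\hat u_k+\sum_{l\in\mathcal L^{(1)}_n,\,l<k}c_{kl}\hat u_l$. *)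

theory Defs
  imports Complex_Main "HOL-Combinatorics.Permutations"
begin

text \<open>Elements of C[z_1^{+-1},...,z_n^{+-1}] (x) V^{(x)n} are represented by their coefficient
functions on basis keys (e, c): e = exponent list (length n), c = list of tensor indices in {1..N}
(length n); the key (e,c) stands for z^e (x) v_{c_1} (x) ... (x) v_{c_n}.
Positions (the index i of z_i, K_ij, E^(i), d_i) are 0-based list positions i < n.
Operator-valued formal series in u^{-1} are functions nat => operator (coefficient of u^{-s}).\<close>

type_synonym key = "int list \<times> nat list"
type_synonym vec = "key \<Rightarrow> complex"
type_synonym op = "vec \<Rightarrow> vec"
type_synonym ser = "nat \<Rightarrow> op"

definition vzero :: vec where "vzero = (\<lambda>_. 0)"
definition vadd :: "vec \<Rightarrow> vec \<Rightarrow> vec" where "vadd f g = (\<lambda>k. f k + g k)"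
definition vscale :: "complex \<Rightarrow> vec \<Rightarrow> vec" where "vscale a f = (\<lambda>k. a * f k)"
definition vsum :: "('a \<Rightarrow> vec) \<Rightarrow> 'a set \<Rightarrow> vec" where "vsum F A = (\<lambda>k. \<Sum>a\<in>A. F a k)"
definition opsum :: "('a \<Rightarrow> op) \<Rightarrow> 'a set \<Rightarrow> op" where "opsum F A = (\<lambda>f. vsum (\<lambda>a. F a f) A)"

definition basis :: "key \<Rightarrow> vec" where "basis k = (\<lambda>k'. if k' = k then 1 else 0)"

text \<open>Linear extension of an action on basis vectors (to finitely supported vectors).\<close>
definition lin :: "(key \<Rightarrow> vec) \<Rightarrow> op" where
  "lin M f = vsum (\<lambda>k'. vscale (f k') (M k')) {k'. f k' \<noteq> 0}"

definition swapl :: "nat \<Rightarrow> nat \<Rightarrow> 'a list \<Rightarrow> 'a list" where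
  "swapl i j xs = xs[i := xs ! j, j := xs ! i]"

text \<open>K_ij swaps z_i and z_j; P_ij swaps tensor factors i and j.\<close>
definition Kop :: "nat \<Rightarrow> nat \<Rightarrow> op" where "Kop i j f = (\<lambda>(e, c). f (swapl i j e, c))"
definition Pop :: "nat \<Rightarrow> nat \<Rightarrow> op" where "Pop i j f = (\<lambda>(e, c). f (e, swapl i j c))"

text \<open>z_i d/dz_i\<close>
definition zdop :: "nat \<Rightarrow> op" where "zdop i f = (\<lambda>(e, c). of_int (e ! i) * f (e, c))"

text \<open>E^{(i)}_{ab}: E_{ab} v_b = v_a on the i-th factor.\<close>
definition Eop :: "nat \<Rightarrow> nat \<Rightarrow> nat \<Rightarrow> op" where
  "Eop i a b f = (\<lambda>(e, c). if c ! i = a then f (e, c[i := b]) else 0)"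

text \<open>Rop i j = z_j/(z_j - z_i) (K_ij - 1), computed on monomials:
 for x = z_i, y = z_j:  y/(y-x) (x^b y^a - x^a y^b) = sum_{t<a-b} x^(b+t) y^(a-t) if a > b,
 = - sum_{t<b-a} x^(a+t) y^(b-t) if a < b, and 0 if a = b.\<close>
definition Rimg :: "nat \<Rightarrow> nat \<Rightarrow> key \<Rightarrow> vec" where
  "Rimg i j k = (case k of (e, c) \<Rightarrow>
     (let a = e ! i; b = e ! j in
      if b < a then vsum (\<lambda>t. basis (e[i := b + int t, j := a - int t], c)) {..<nat (a - b)}
      else if a < b then vscale (-1) (vsum (\<lambda>t. basis (e[i := a + int t, j := b - int t], c)) {..<nat (b - a)})
      else vzero))"

definition Rop :: "nat \<Rightarrow> nat \<Rightarrow> op" where "Rop i j = lin (Rimg i j)"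

text \<open>d_i(beta), for 0-based position i (so the constant n - i of the paper becomes n - 1 - i).\<close>
definition dop :: "nat \<Rightarrow> real \<Rightarrow> nat \<Rightarrow> op" where
  "dop n \<beta> i f = (\<lambda>k. complex_of_real (1 / \<beta>) * zdop i f k + of_nat (n - 1 - i) * f k
      + (\<Sum>j\<in>{i<..<n}. Rop i j f k) - (\<Sum>j\<in>{..<i}. Rop j i f k))"

definition unitser :: ser where "unitser s = (if s = 0 then id else (\<lambda>_. vzero))"

definition conv :: "ser \<Rightarrow> ser \<Rightarrow> ser" where
  "conv S1 S2 s = opsum (\<lambda>p. S1 p \<circ> S2 (s - p)) {..s}"

text \<open>L^{(i)}_{ab}(u) = delta_ab + (u + d_i)^{-1} E^{(i)}_{ba}
  = delta_ab + sum_{s>=1} (-1)^(s-1) d_i^(s-1) E^{(i)}_{ba} u^{-s}.\<close>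
definition Lser :: "nat \<Rightarrow> real \<Rightarrow> nat \<Rightarrow> nat \<Rightarrow> nat \<Rightarrow> ser" where
  "Lser n \<beta> i a b s = (if s = 0 then (if a = b then id else (\<lambda>_. vzero))
      else (\<lambda>f. vscale ((-1) ^ (s - 1)) ((dop n \<beta> i ^^ (s - 1)) (Eop i b a f))))"

text \<open>Tpart n N beta m a b = sum_c L^{(0)}_{a c_1} ... L^{(m)}_{c_m b} (0-based positions).\<close>
fun Tpart :: "nat \<Rightarrow> nat \<Rightarrow> real \<Rightarrow> nat \<Rightarrow> nat \<Rightarrow> nat \<Rightarrow> ser" where
  "Tpart n N \<beta> 0 a b = Lser n \<beta> 0 a b"
| "Tpart n N \<beta> (Suc m) a b =
     (\<lambda>s. opsum (\<lambda>c. conv (Tpart n N \<beta> m a c) (Lser n \<beta> (Suc m) c b) s) {1..N})"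

definition Tser :: "nat \<Rightarrow> nat \<Rightarrow> real \<Rightarrow> nat \<Rightarrow> nat \<Rightarrow> ser" where
  "Tser n N \<beta> a b = Tpart n N \<beta> (n - 1) a b"

text \<open>T_{ab}(u - j;beta) re-expanded in u^{-1}:
  (u-j)^{-s} = sum_r binom(s+r-1, r) j^r u^{-s-r}.\<close>
definition Tshift :: "nat \<Rightarrow> nat \<Rightarrow> real \<Rightarrow> nat \<Rightarrow> nat \<Rightarrow> nat \<Rightarrow> ser" where
  "Tshift n N \<beta> j a b t = (if t = 0 then Tser n N \<beta> a b 0
     else opsum (\<lambda>s f. vscale (of_nat ((t - 1) choose (t - s)) * of_nat j ^ (t - s)) (Tser n N \<beta> a b s f)) {1..t})"

fun prodser :: "(nat \<Rightarrow> ser) \<Rightarrow> nat \<Rightarrow> ser" where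
  "prodser F 0 = unitser"
| "prodser F (Suc m) = conv (prodser F m) (F (Suc m))"

text \<open>A_m(u;beta) = sum_w sign(w) T_{1 w(1)}(u) T_{2 w(2)}(u-1) ... T_{m w(m)}(u-m+1).\<close>
definition Aser :: "nat \<Rightarrow> nat \<Rightarrow> real \<Rightarrow> nat \<Rightarrow> ser" where
  "Aser n N \<beta> m t = opsum (\<lambda>w f. vscale (of_int (sign w))
      (prodser (\<lambda>r. Tshift n N \<beta> (r - 1) r (w r)) m t f)) {w. w permutes {1..m}}"

text \<open>k = under k - N * over k with under k in {1..N}.\<close>
definition under :: "nat \<Rightarrow> int \<Rightarrow> int" where "under N k = (k - 1) mod int N + 1"
definition over :: "nat \<Rightarrow> int \<Rightarrow> int" where "over N k = (under N k - k) div int N"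

definition uhat :: "nat \<Rightarrow> nat \<Rightarrow> int list \<Rightarrow> vec" where
  "uhat n N k = vsum (\<lambda>w. vscale (of_int (sign w))
      (basis (map (\<lambda>r. over N (k ! w r)) [0..<n], map (\<lambda>r. nat (under N (k ! w r))) [0..<n])))
      {w. w permutes {..<n}}"

definition Lone :: "nat \<Rightarrow> int list set" where
  "Lone n = {k. length k = n \<and> sorted_wrt (>) k}"

text \<open>Dominance order: dom_less l k means k > l.\<close>
definition dom_less :: "int list \<Rightarrow> int list \<Rightarrow> bool" where
  "dom_less l k = (l \<noteq> k \<and> length l = length k \<and> sum_list l = sum_list k
     \<and> (\<forall>i\<le>length k. sum_list (take i l) \<le> sum_list (take i k)))"

definition is_X :: "nat \<Rightarrow> nat \<Rightarrow> real \<Rightarrow> int list \<Rightarrow> vec \<Rightarrow> bool" where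
  "is_X n N \<beta> k X =
    ((\<exists>cf :: int list \<Rightarrow> complex.
        X = vadd (uhat n N k) (vsum (\<lambda>l. vscale (cf l) (uhat n N l)) {l \<in> Lone n. dom_less l k}))
     \<and> (\<forall>m\<in>{1..N}. \<forall>t. \<exists>ev. Aser n N \<beta> m t X = vscale ev X))"

definition Dop :: "nat \<Rightarrow> op" where "Dop n f = (\<lambda>k. \<Sum>i<n. zdop i f k)"

end

theory Submission
  imports Defs
begin


lemma Tpart0:
  assumes "a \<in> {1..N}"
  shows "Tpart n N \<beta> m a b 0 f = (if a = b then f else vzero)"
proof (induction m arbitrary: b f)
  case 0
  then show ?case by (simp add: Lser_def)
next
  case (Suc m)
  show ?case
  proof (rule ext)
    fix x
    have "Tpart n N \<beta> (Suc m) a b 0 f x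
       = (\<Sum>c\<in>{1..N}. (if a = c then Lser n \<beta> (Suc m) c b 0 f else vzero) x)"
      by (simp add: opsum_def vsum_def conv_def Suc)
    also have "\<dots> = (\<Sum>c\<in>{1..N}. if c = a then (if a = b then f x else 0) else 0)"
      by (rule sum.cong) (auto simp: Lser_def vzero_def)
    also have "\<dots> = (if a = b then f else vzero) x" using assms by (simp add: vzero_def)
    finally show "Tpart n N \<beta> (Suc m) a b 0 f x = (if a = b then f else vzero) x" .
  qed
qed

lemma Tpart1:
  assumes "a \<in> {1..N}" "b \<in> {1..N}"
  shows "Tpart n N \<beta> m a b (Suc 0) f = vsum (\<lambda>i. Eop i b a f) {..m}"
  using assms(2)
proof (induction m arbitrary: b f)
  case 0
  then show ?case by (simp add: Lser_def vsum_def vscale_def)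
next
  case (Suc m)
  show ?case
  proof (rule ext)
    fix x
    have "{..Suc 0} = {0, Suc 0}" by auto
    then have "Tpart n N \<beta> (Suc m) a b (Suc 0) f x
       = (\<Sum>c\<in>{1..N}. Tpart n N \<beta> m a c 0 (Lser n \<beta> (Suc m) c b (Suc 0) f) x
             + Tpart n N \<beta> m a c (Suc 0) (Lser n \<beta> (Suc m) c b 0 f) x)"
      by (simp add: opsum_def vsum_def conv_def)
    also have "\<dots> = (\<Sum>c\<in>{1..N}. (if c = a then Eop (Suc m) b a f x else 0)
             + (if c = b then vsum (\<lambda>i. Eop i b a f) {..m} x else 0))"
    proof (rule sum.cong)
      fix c assume c: "c \<in> {1..N}"
      show "Tpart n N \<beta> m a c 0 (Lser n \<beta> (Suc m) c b (Suc 0) f) x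
             + Tpart n N \<beta> m a c (Suc 0) (Lser n \<beta> (Suc m) c b 0 f) x =
           (if c = a then Eop (Suc m) b a f x else 0)
             + (if c = b then vsum (\<lambda>i. Eop i b a f) {..m} x else 0)"
      proof -
        have L0: "Lser n \<beta> (Suc m) c b 0 f = (if c = b then f else vzero)"
          by (simp add: Lser_def)
        have L1: "Lser n \<beta> (Suc m) c b (Suc 0) f = Eop (Suc m) b c f"
          by (simp add: Lser_def vscale_def)
        have Z: "vsum (\<lambda>i. Eop i c a vzero) {..m} x = 0"
          by (simp add: vsum_def Eop_def vzero_def split: prod.splits)
        show ?thesis
          unfolding L0 L1 Tpart0[OF assms(1)] Suc.IH[OF c]
          using Z by (auto simp: vzero_def)
      qed
    qed simp
    also have "\<dots> = vsum (\<lambda>i. Eop i b a f) {..Suc m} x"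
      using assms Suc.prems by (simp add: sum.distrib vsum_def add.commute)
    finally show "Tpart n N \<beta> (Suc m) a b (Suc 0) f x = vsum (\<lambda>i. Eop i b a f) {..Suc m} x" .
  qed
qed


lemma upd_same: "c ! i = a \<Longrightarrow> c[i := a] = c"
  by (metis list_update_id)

lemma Tser_diag:
  assumes "a \<in> {1..N}" "n \<ge> 1"
  shows "Tser n N \<beta> a a (Suc 0) f (e, c) = of_nat (card {i. i < n \<and> c ! i = a}) * f (e, c)"
proof -
  have "{..n - 1} = {..<n}" using assms(2) by auto
  then have "Tser n N \<beta> a a (Suc 0) f (e, c) = (\<Sum>i<n. if c ! i = a then f (e, c) else 0)"
    unfolding Tser_def Tpart1[OF assms(1) assms(1)]
    unfolding vsum_def Eop_def by (intro sum.cong) (auto simp: upd_same)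
  also have "\<dots> = (\<Sum>i\<in>{i. i < n \<and> c ! i = a}. f (e, c))"
  proof -
    have "{i. i < n \<and> c ! i = a} = {i\<in>{..<n}. c ! i = a}" by auto
    then show ?thesis by (simp only: sum.inter_filter[OF finite_lessThan])
  qed
  also have "\<dots> = of_nat (card {i. i < n \<and> c ! i = a}) * f (e, c)" by simp
  finally show ?thesis .
qed

lemma Tser0:
  assumes "a \<in> {1..N}"
  shows "Tser n N \<beta> a b 0 f = (if a = b then f else vzero)"
  unfolding Tser_def using Tpart0[OF assms] .

lemma Tser1_zero:
  assumes "a \<in> {1..N}" "b \<in> {1..N}"
  shows "Tser n N \<beta> a b (Suc 0) vzero = vzero"
  unfolding Tser_def Tpart1[OF assms]
  by (auto simp: vsum_def Eop_def vzero_def)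

lemma Tshift0:
  assumes "a \<in> {1..N}"
  shows "Tshift n N \<beta> j a b 0 f = (if a = b then f else vzero)"
  unfolding Tshift_def using Tser0[OF assms] by simp

lemma Tshift1:
  shows "Tshift n N \<beta> j a b (Suc 0) f = Tser n N \<beta> a b (Suc 0) f"
  unfolding Tshift_def by (simp add: opsum_def vsum_def vscale_def)

lemma fix_others:
  assumes "w permutes {1..m}" "\<forall>r'\<in>{1..m} - {r}. w r' = r'"
  shows "w = id"
proof (rule ext)
  fix x
  have fx: "w y = y" if "y \<noteq> r" for y
    using assms that permutes_not_in[OF assms(1)] by (cases "y \<in> {1..m}") auto
  show "w x = id x"
  proof (cases "x = r")
    case True
    show ?thesis
    proof (rule ccontr)
      assume "w x \<noteq> id x"
      then have "w r \<noteq> r" using True by simp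
      then have "w (w r) = w r" using fx by simp
      then have "w r = r" using permutes_inj[OF assms(1)] by (simp add: inj_eq)
      with \<open>w r \<noteq> r\<close> show False by simp
    qed
  qed (simp add: fx)
qed

lemma prodser0:
  assumes "m \<le> N"
  shows "prodser (\<lambda>r. Tshift n N \<beta> (r - 1) r (w r)) m 0 g
       = (if \<forall>r\<in>{1..m}. w r = r then g else vzero)"
  using assms
proof (induction m arbitrary: g)
  case 0
  then show ?case by (simp add: unitser_def)
next
  case (Suc m)
  have A: "Suc m \<in> {1..N}" using Suc.prems by simp
  have "prodser (\<lambda>r. Tshift n N \<beta> (r - 1) r (w r)) (Suc m) 0 g
     = prodser (\<lambda>r. Tshift n N \<beta> (r - 1) r (w r)) m 0 (Tshift n N \<beta> m (Suc m) (w (Suc m)) 0 g)"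
    by (simp add: conv_def opsum_def vsum_def)
  also have "\<dots> = (if \<forall>r\<in>{1..Suc m}. w r = r then g else vzero)"
  proof -
    have s: "{1..Suc m} = insert (Suc m) {1..m}" by auto
    show ?thesis
    unfolding Tshift0[OF A] Suc.IH[OF Suc_leD[OF Suc.prems]] s
    by auto
  qed
  finally show ?case .
qed

lemma prodser1:
  assumes "m \<le> N" "\<forall>r\<in>{1..m}. w r \<in> {1..N}"
  shows "prodser (\<lambda>r. Tshift n N \<beta> (r - 1) r (w r)) m (Suc 0) g
       = vsum (\<lambda>r. if \<forall>r'\<in>{1..m} - {r}. w r' = r' then Tser n N \<beta> r (w r) (Suc 0) g else vzero) {1..m}"
  using assms
proof (induction m arbitrary: g)
  case 0
  then show ?case by (simp add: unitser_def vsum_def vzero_def)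
next
  case (Suc m)
  have A: "Suc m \<in> {1..N}" using Suc.prems by simp
  have B: "m \<le> N" using Suc.prems by simp
  have W: "\<forall>r\<in>{1..m}. w r \<in> {1..N}" using Suc.prems by simp
  have "{..Suc 0} = {0, Suc 0}" by auto
  then have "prodser (\<lambda>r. Tshift n N \<beta> (r - 1) r (w r)) (Suc m) (Suc 0) g
     = vadd (prodser (\<lambda>r. Tshift n N \<beta> (r - 1) r (w r)) m 0 (Tshift n N \<beta> m (Suc m) (w (Suc m)) (Suc 0) g))
            (prodser (\<lambda>r. Tshift n N \<beta> (r - 1) r (w r)) m (Suc 0) (Tshift n N \<beta> m (Suc m) (w (Suc m)) 0 g))"
    by (simp add: conv_def opsum_def vsum_def vadd_def)
  also have "\<dots> = vsum (\<lambda>r. if \<forall>r'\<in>{1..Suc m} - {r}. w r' = r' then Tser n N \<beta> r (w r) (Suc 0) g else vzero) {1..Suc m}"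
  proof (rule ext)
    fix x
    have s: "{1..Suc m} = insert (Suc m) {1..m}" by auto
    have e1: "{1..Suc m} - {Suc m} = {1..m}" by auto
    have e2: "r \<in> {1..m} \<Longrightarrow> (\<forall>r'\<in>{1..Suc m} - {r}. w r' = r') = ((\<forall>r'\<in>{1..m} - {r}. w r' = r') \<and> w (Suc m) = Suc m)" for r
      by (auto simp: le_Suc_eq)
    have split: "\<And>F::nat\<Rightarrow>complex. sum F {1..Suc m} = F (Suc m) + sum F {1..m}" by (simp add: s)
    have H: "vsum (\<lambda>r. if \<forall>r'\<in>{1..Suc m} - {r}. w r' = r' then Tser n N \<beta> r (w r) (Suc 0) g else vzero) {1..Suc m} x
      = (if \<forall>r'\<in>{1..m}. w r' = r' then Tser n N \<beta> (Suc m) (w (Suc m)) (Suc 0) g x else 0)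
        + (\<Sum>r\<in>{1..m}. if (\<forall>r'\<in>{1..m} - {r}. w r' = r') \<and> w (Suc m) = Suc m then Tser n N \<beta> r (w r) (Suc 0) g x else 0)"
      unfolding vsum_def split e1
    proof (intro arg_cong2[where f="(+)"] sum.cong refl)
      show "(if \<forall>r'\<in>{1..m}. w r' = r' then Tser n N \<beta> (Suc m) (w (Suc m)) (Suc 0) g else vzero) x =
        (if \<forall>r'\<in>{1..m}. w r' = r' then Tser n N \<beta> (Suc m) (w (Suc m)) (Suc 0) g x else 0)"
        by (simp add: vzero_def)
    next
      fix r assume r: "r \<in> {1..m}"
      show "(if \<forall>r'\<in>{1..Suc m} - {r}. w r' = r' then Tser n N \<beta> r (w r) (Suc 0) g else vzero) x =
        (if (\<forall>r'\<in>{1..m} - {r}. w r' = r') \<and> w (Suc m) = Suc m then Tser n N \<beta> r (w r) (Suc 0) g x else 0)"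
        unfolding e2[OF r] by (simp add: vzero_def)
    qed
    have Z: "(\<Sum>r\<in>{1..m}. if (\<forall>r'\<in>{1..m} - {r}. w r' = r') then Tser n N \<beta> r (w r) (Suc 0) vzero x else 0) = 0"
    proof (rule sum.neutral, intro ballI)
      fix r assume r: "r \<in> {1..m}"
      have "w r \<in> {1..N}" using W r by blast
      then show "(if (\<forall>r'\<in>{1..m} - {r}. w r' = r') then Tser n N \<beta> r (w r) (Suc 0) vzero x else 0) = 0"
        using Tser1_zero[of r N "w r" n \<beta>] r B by (simp add: vzero_def)
    qed
    have P0: "prodser (\<lambda>r. Tshift n N \<beta> (r - 1) r (w r)) m 0 (Tshift n N \<beta> m (Suc m) (w (Suc m)) (Suc 0) g) x
      = (if \<forall>r'\<in>{1..m}. w r' = r' then Tser n N \<beta> (Suc m) (w (Suc m)) (Suc 0) g x else 0)"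
      unfolding prodser0[OF B] Tshift1 by (simp add: vzero_def)
    have P1: "prodser (\<lambda>r. Tshift n N \<beta> (r - 1) r (w r)) m (Suc 0) (Tshift n N \<beta> m (Suc m) (w (Suc m)) 0 g) x
      = (\<Sum>r\<in>{1..m}. if (\<forall>r'\<in>{1..m} - {r}. w r' = r') \<and> w (Suc m) = Suc m then Tser n N \<beta> r (w r) (Suc 0) g x else 0)"
    proof (cases "w (Suc m) = Suc m")
      case True
      have "Tshift n N \<beta> m (Suc m) (w (Suc m)) 0 g = g" using True Tshift0[OF A] by auto
      then show ?thesis unfolding Suc.IH[OF B W] vsum_def using True
        by (intro sum.cong) (simp_all add: vzero_def)
    next
      case False
      then have "prodser (\<lambda>r. Tshift n N \<beta> (r - 1) r (w r)) m (Suc 0) (Tshift n N \<beta> m (Suc m) (w (Suc m)) 0 g) x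
         = (\<Sum>r\<in>{1..m}. if (\<forall>r'\<in>{1..m} - {r}. w r' = r') then Tser n N \<beta> r (w r) (Suc 0) vzero x else 0)"
      proof -
        have "Tshift n N \<beta> m (Suc m) (w (Suc m)) 0 g = vzero" using False Tshift0[OF A] by auto
        then show ?thesis unfolding Suc.IH[OF B W] vsum_def
          by (intro sum.cong) (simp_all add: vzero_def)
      qed
      then show ?thesis using False Z by simp
    qed
    show "vadd (prodser (\<lambda>r. Tshift n N \<beta> (r - 1) r (w r)) m 0 (Tshift n N \<beta> m (Suc m) (w (Suc m)) (Suc 0) g))
            (prodser (\<lambda>r. Tshift n N \<beta> (r - 1) r (w r)) m (Suc 0) (Tshift n N \<beta> m (Suc m) (w (Suc m)) 0 g)) x
      = vsum (\<lambda>r. if \<forall>r'\<in>{1..Suc m} - {r}. w r' = r' then Tser n N \<beta> r (w r) (Suc 0) g else vzero) {1..Suc m} x"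
      unfolding H vadd_def P0 P1 ..
  qed
  finally show ?case .
qed




lemma Aser_1:
  assumes "m \<in> {1..N}"
  shows "Aser n N \<beta> m (Suc 0) f x = (\<Sum>r\<in>{1..m}. Tser n N \<beta> r r (Suc 0) f x)"
proof -
  let ?P = "{w. w permutes {1..m}}"
  have mN: "m \<le> N" using assms by simp
  define g where "g w = of_int (sign w) * (\<Sum>r\<in>{1..m}. (if \<forall>r'\<in>{1..m} - {r}. w r' = r' then Tser n N \<beta> r (w r) (Suc 0) f x else 0))" for w :: "nat \<Rightarrow> nat"
  have "Aser n N \<beta> m (Suc 0) f x = (\<Sum>w\<in>?P. g w)"
    unfolding Aser_def opsum_def
  proof (simp only: vsum_def vscale_def, intro sum.cong refl)
    fix w assume w: "w \<in> ?P"
    have W: "\<forall>r\<in>{1..m}. w r \<in> {1..N}"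
    proof
      fix r assume r: "r \<in> {1..m}"
      have "w r \<in> {1..m}" using permutes_in_image[of w "{1..m}" r] w r by simp
      then show "w r \<in> {1..N}" using mN by simp
    qed
    show "of_int (sign w) * prodser (\<lambda>r. Tshift n N \<beta> (r - 1) r (w r)) m (Suc 0) f x = g w"
      unfolding prodser1[OF mN W] g_def vsum_def
      by (intro arg_cong2[where f="(*)"] sum.cong refl) (simp add: vzero_def)
  qed
  also have "\<dots> = (\<Sum>w\<in>?P. if w = id then g id else 0)"
  proof (intro sum.cong refl)
    fix w assume w: "w \<in> ?P"
    show "g w = (if w = id then g id else 0)"
    proof (cases "w = id")
      case False
      have nf: "\<And>r. \<not> (\<forall>r'\<in>{1..m} - {r}. w r' = r')"
        using fix_others[of w m] w False by auto
      have "(\<Sum>r\<in>{1..m}. (if \<forall>r'\<in>{1..m} - {r}. w r' = r' then Tser n N \<beta> r (w r) (Suc 0) f x else 0)) = 0"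
        by (intro sum.neutral ballI if_not_P nf)
      then show ?thesis using False by (simp add: g_def)
    qed simp
  qed
  also have "\<dots> = g id"
    using finite_permutations[of "{1..m}"] permutes_id[of "{1..m}"] by (simp add: sum.delta')
  also have "\<dots> = (\<Sum>r\<in>{1..m}. Tser n N \<beta> r r (Suc 0) f x)"
    by (simp add: g_def sign_id)
  finally show ?thesis .
qed


lemma under_range:
  assumes "N \<ge> 1"
  shows "1 \<le> under N x \<and> under N x \<le> int N"
proof -
  have N: "int N > 0" using assms by simp
  have "0 \<le> (x - 1) mod int N" using N by (rule pos_mod_sign)
  moreover have "(x - 1) mod int N < int N" using N by (rule pos_mod_bound)
  ultimately show ?thesis unfolding under_def by linarith
qed

lemma under_over:
  assumes "N \<ge> 1"
  shows "under N x - int N * over N x = x"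
proof -
  define q where "q = (x - 1) div int N"
  define r where "r = (x - 1) mod int N"
  have x: "int N * q + r = x - 1" unfolding q_def r_def by (rule mult_div_mod_eq)
  have u: "under N x = r + 1" by (simp add: under_def r_def)
  have d: "under N x - x = int N * (- q)" using u x by (simp add: algebra_simps)
  have "over N x = (int N * (- q)) div int N" unfolding over_def d ..
  also have "\<dots> = - q" using assms by (subst nonzero_mult_div_cancel_left) auto
  finally have "over N x = - q" .
  then show ?thesis using u x by (simp add: algebra_simps)
qed

lemma nat_under:
  assumes "N \<ge> 1"
  shows "int (nat (under N x)) = under N x"
  using under_range[OF assms, of x] by simp

lemma count_sum:
  assumes "\<forall>i<n. c ! i \<in> {1..N}"
  shows "(\<Sum>i<n. c ! i) = (\<Sum>a\<in>{1..N}. a * card {i. i < n \<and> c ! i = a})"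
proof -
  have "(\<Sum>i<n. c ! i) = (\<Sum>i<n. \<Sum>a\<in>{1..N}. if c ! i = a then a else 0)"
    using assms by (intro sum.cong refl) (simp add: sum.delta')
  also have "\<dots> = (\<Sum>a\<in>{1..N}. \<Sum>i<n. if c ! i = a then a else 0)"
    by (rule sum.swap)
  also have "\<dots> = (\<Sum>a\<in>{1..N}. a * card {i. i < n \<and> c ! i = a})"
  proof (intro sum.cong refl)
    fix a
    have e: "{i. i < n \<and> c ! i = a} = {i\<in>{..<n}. c ! i = a}" by auto
    show "(\<Sum>i<n. if c ! i = a then a else 0) = a * card {i. i < n \<and> c ! i = a}"
      unfolding e sum.inter_filter[OF finite_lessThan, symmetric] by simp
  qed
  finally show ?thesis .
qed

lemma cnt_from_partial:
  fixes f g :: "nat \<Rightarrow> complex"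
  assumes "\<forall>m\<in>{1..N}. (\<Sum>r\<in>{1..m}. f r) = (\<Sum>r\<in>{1..m}. g r)" "a \<in> {1..N}"
  shows "f a = g a"
proof -
  obtain b where b: "a = Suc b" using assms(2) by (cases a) auto
  have 1: "(\<Sum>r\<in>{1..b}. f r) = (\<Sum>r\<in>{1..b}. g r)"
  proof (cases "b = 0")
    case False
    then have "b \<in> {1..N}" using assms(2) b by auto
    then show ?thesis using assms(1) by blast
  qed simp
  have "Suc b \<in> {1..N}" using assms b by auto
  then have "(\<Sum>r\<in>{1..Suc b}. f r) = (\<Sum>r\<in>{1..Suc b}. g r)" using assms(1) by blast
  then show ?thesis using 1 b by simp
qed


lemma strict_nth_inj:
  assumes "sorted_wrt (>) (k::int list)" "i < length k" "j < length k" "k ! i = k ! j"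
  shows "i = j"
proof (rule ccontr)
  assume "i \<noteq> j"
  then consider "i < j" | "j < i" by linarith
  then show False
  proof cases
    case 1
    have "k ! j < k ! i" using sorted_wrt_nth_less[OF assms(1) 1 assms(3)] .
    then show False using assms(4) by simp
  next
    case 2
    have "k ! i < k ! j" using sorted_wrt_nth_less[OF assms(1) 2 assms(2)] .
    then show False using assms(4) by simp
  qed
qed

lemma strict_unique:
  assumes "sorted_wrt (>) (k::int list)" "sorted_wrt (>) l" "set k = set l"
  shows "k = l"
proof -
  have d: "distinct (rev xs)" if "sorted_wrt (>) (xs::int list)" for xs
  proof -
    have "distinct xs" unfolding distinct_conv_nth
      using strict_nth_inj[OF that] by blast
    then show ?thesis by simp
  qed
  have s: "sorted (rev xs)" if "sorted_wrt (>) (xs::int list)" for xs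
  proof -
    have "sorted_wrt (\<lambda>x y. y \<le> x) xs"
      using sorted_wrt_mono_rel[of xs "\<lambda>x y. y < x" "\<lambda>x y. y \<le> x"] that by force
    then show ?thesis unfolding sorted_wrt_rev .
  qed
  have "set (rev k) = set (rev l)" using assms(3) by simp
  then have "rev k = rev l"
    using sorted_distinct_set_unique[OF s[OF assms(1)] d[OF assms(1)] s[OF assms(2)] d[OF assms(2)]] by blast
  then show ?thesis by simp
qed



definition keyof :: "nat \<Rightarrow> nat \<Rightarrow> int list \<Rightarrow> (nat \<Rightarrow> nat) \<Rightarrow> key" where
  "keyof n N l w = (map (\<lambda>r. over N (l ! w r)) [0..<n], map (\<lambda>r. nat (under N (l ! w r))) [0..<n])"

lemma uhat_eval:
  "uhat n N l x = (\<Sum>w\<in>{w. w permutes {..<n}}. of_int (sign w) * (if x = keyof n N l w then 1 else 0))"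
  by (simp add: uhat_def vsum_def vscale_def basis_def keyof_def)

lemma uhat_supp:
  assumes "uhat n N l x \<noteq> 0"
  shows "\<exists>w. w permutes {..<n} \<and> x = keyof n N l w"
proof -
  from assms have "(\<Sum>w\<in>{w. w permutes {..<n}}. of_int (sign w) * (if x = keyof n N l w then 1 else 0)) \<noteq> (0::complex)"
    by (simp add: uhat_eval)
  then obtain w where "w \<in> {w. w permutes {..<n}}" "of_int (sign w) * (if x = keyof n N l w then 1 else 0) \<noteq> (0::complex)"
    by (rule sum.not_neutral_contains_not_neutral)
  then show ?thesis by (auto split: if_splits)
qed

lemma keyof_eq:
  assumes "N \<ge> 1" "keyof n N k id = keyof n N l w" "r < n"
  shows "k ! r = l ! w r"
proof -
  from assms(2) have "map (\<lambda>r. over N (k ! id r)) [0..<n] = map (\<lambda>r. over N (l ! w r)) [0..<n]"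
    and "map (\<lambda>r. nat (under N (k ! id r))) [0..<n] = map (\<lambda>r. nat (under N (l ! w r))) [0..<n]"
    unfolding keyof_def prod.inject by blast+
  then have o: "\<forall>x\<in>set [0..<n]. over N (k ! x) = over N (l ! w x)"
    and u: "\<forall>x\<in>set [0..<n]. nat (under N (k ! x)) = nat (under N (l ! w x))"
    unfolding map_eq_conv by simp_all
  have o1: "over N (k ! r) = over N (l ! w r)" using o assms(3) by simp
  have "int (nat (under N (k ! r))) = int (nat (under N (l ! w r)))" using u assms(3) by simp
  then have u1: "under N (k ! r) = under N (l ! w r)" unfolding nat_under[OF assms(1)] .
  have "k ! r = under N (k ! r) - int N * over N (k ! r)" using under_over[OF assms(1), of "k ! r"] by simp
  also have "\<dots> = under N (l ! w r) - int N * over N (l ! w r)" using o1 u1 by simp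
  also have "\<dots> = l ! w r" using under_over[OF assms(1), of "l ! w r"] by simp
  finally show ?thesis .
qed

lemma uhat_self:
  assumes "N \<ge> 1" "k \<in> Lone n"
  shows "uhat n N k (keyof n N k id) = 1"
proof -
  have len: "length k = n" and srt: "sorted_wrt (>) k" using assms(2) by (auto simp: Lone_def)
  have "uhat n N k (keyof n N k id) = (\<Sum>w\<in>{w. w permutes {..<n}}. if w = id then 1 else 0)"
    unfolding uhat_eval
  proof (intro sum.cong refl)
    fix w assume w: "w \<in> {w. w permutes {..<n}}"
    have "w = id" if eq: "keyof n N k id = keyof n N k w"
    proof (rule ext)
      fix r
      show "w r = id r"
      proof (cases "r < n")
        case True
        have "w r < n" using permutes_in_image[of w "{..<n}" r] w True by simp
        have "k ! r = k ! w r" using keyof_eq[OF assms(1) eq True] by simp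
        then have "r = w r" using strict_nth_inj[OF srt, of r "w r"] True len \<open>w r < n\<close> by blast
        then show ?thesis by simp
      next
        case False
        then show ?thesis using permutes_not_in[of w "{..<n}" r] w by simp
      qed
    qed
    then show "of_int (sign w) * (if keyof n N k id = keyof n N k w then 1 else 0) = (if w = id then 1 else (0::complex))"
      by (auto simp: sign_id)
  qed
  also have "\<dots> = 1"
    using finite_permutations[of "{..<n}"] permutes_id[of "{..<n}"] by (simp add: sum.delta')
  finally show ?thesis .
qed

lemma uhat_other:
  assumes "N \<ge> 1" "k \<in> Lone n" "l \<in> Lone n" "l \<noteq> k"
  shows "uhat n N l (keyof n N k id) = 0"
proof (rule ccontr)
  assume "uhat n N l (keyof n N k id) \<noteq> 0"
  then obtain w where w: "w permutes {..<n}" and eq: "keyof n N k id = keyof n N l w"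
    using uhat_supp by blast
  have lk: "length k = n" "sorted_wrt (>) k" "length l = n" "sorted_wrt (>) l"
    using assms(2,3) by (auto simp: Lone_def)
  have kr: "k ! r = l ! w r" if "r < n" for r using keyof_eq[OF assms(1) eq that] .
  have "set k = set l"
  proof
    show "set k \<subseteq> set l"
    proof
      fix y assume "y \<in> set k"
      then obtain r where r: "r < n" "y = k ! r" using lk by (auto simp: in_set_conv_nth)
      have "w r < n" using permutes_in_image[of w "{..<n}" r] w r by simp
      have "y = l ! w r" using kr[OF r(1)] r by simp
      then show "y \<in> set l" using \<open>w r < n\<close> lk nth_mem by metis
    qed
  next
    show "set l \<subseteq> set k"
    proof
      fix y assume "y \<in> set l"
      then obtain i where i: "i < n" "y = l ! i" using lk by (auto simp: in_set_conv_nth)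
      have "i \<in> w ` {..<n}" using permutes_image[OF w] i by simp
      then obtain r where r: "r < n" "w r = i" by auto
      have "y = k ! r" using kr[OF r(1)] i r by simp
      then show "y \<in> set k" using r lk nth_mem by metis
    qed
  qed
  then have "k = l" using strict_unique lk by blast
  then show False using assms(4) by simp
qed



theorem proposition13:
  fixes N n :: nat and \<beta> :: real and k :: "int list" and X :: vec
  assumes "N \<ge> 1" and "n \<ge> 1" and "\<beta> > 0" and "k \<in> Lone n"
    and "is_X n N \<beta> k X"
  shows "(\<forall>a\<in>{1..N}. Tser n N \<beta> a a 1 X
            = vscale (of_nat (card {i. i < n \<and> nat (under N (k ! i)) = a})) X)
         \<and> Dop n X = vscale (of_int (\<Sum>i<n. over N (k ! i))) X"
proof -
  note N1 = assms(1) and n1 = assms(2) and kL = assms(4)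
  define S where "S = {l \<in> Lone n. dom_less l k}"
  obtain cf where Xdef: "X = vadd (uhat n N k) (vsum (\<lambda>l. vscale (cf l) (uhat n N l)) S)"
    and eig: "\<forall>m\<in>{1..N}. \<forall>t. \<exists>ev. Aser n N \<beta> m t X = vscale ev X"
    using assms(5) unfolding is_X_def S_def by blast
  have lenk: "length k = n" using kL by (simp add: Lone_def)
  have Xeval: "X x = uhat n N k x + (\<Sum>l\<in>S. cf l * uhat n N l x)" for x
    unfolding Xdef by (simp add: vadd_def vsum_def vscale_def)
  define kk where "kk = keyof n N k id"
  define ck where "ck = snd kk"
  have ck_nth: "ck ! i = nat (under N (k ! i))" if "i < n" for i
    using that by (simp add: ck_def kk_def keyof_def)
  have X1: "X kk = 1"
  proof -
    have "(\<Sum>l\<in>S. cf l * uhat n N l kk) = 0"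
    proof (rule sum.neutral, rule ballI)
      fix l assume "l \<in> S"
      then have "l \<in> Lone n" "l \<noteq> k" by (auto simp: S_def dom_less_def)
      then show "cf l * uhat n N l kk = 0" using uhat_other[OF N1 kL] kk_def by simp
    qed
    then show ?thesis using Xeval[of kk] uhat_self[OF N1 kL] kk_def by simp
  qed
  have supp: "\<exists>l w. length l = n \<and> sum_list l = sum_list k \<and> w permutes {..<n} \<and> x = keyof n N l w"
    if nz: "X x \<noteq> 0" for x
  proof (cases "uhat n N k x = 0")
    case False
    then show ?thesis using uhat_supp[OF False] lenk by blast
  next
    case True
    then have "(\<Sum>l\<in>S. cf l * uhat n N l x) \<noteq> 0" using nz Xeval[of x] by simp
    then obtain l where l: "l \<in> S" "cf l * uhat n N l x \<noteq> 0"
      by (rule sum.not_neutral_contains_not_neutral)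
    then have "uhat n N l x \<noteq> 0" by simp
    then obtain w where "w permutes {..<n}" "x = keyof n N l w" using uhat_supp by blast
    moreover have "length l = n" "sum_list l = sum_list k" using l(1) lenk by (auto simp: S_def dom_less_def)
    ultimately show ?thesis by blast
  qed
  define cnt where "cnt a c = card {i. i < n \<and> c ! i = a}" for a and c :: "nat list"
  have Aev: "Aser n N \<beta> m (Suc 0) X (e, c) = (\<Sum>r\<in>{1..m}. of_nat (cnt r c)) * X (e, c)"
    if m: "m \<in> {1..N}" for m e c
  proof -
    have "Aser n N \<beta> m (Suc 0) X (e, c) = (\<Sum>r\<in>{1..m}. Tser n N \<beta> r r (Suc 0) X (e, c))"
      by (rule Aser_1[OF m])
    also have "\<dots> = (\<Sum>r\<in>{1..m}. of_nat (cnt r c) * X (e, c))"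
    proof (rule sum.cong[OF refl])
      fix r assume "r \<in> {1..m}"
      then have r: "r \<in> {1..N}" using m by auto
      show "Tser n N \<beta> r r (Suc 0) X (e, c) = of_nat (cnt r c) * X (e, c)"
        unfolding Tser_diag[OF r n1] cnt_def ..
    qed
    also have "\<dots> = (\<Sum>r\<in>{1..m}. of_nat (cnt r c)) * X (e, c)" by (simp add: sum_distrib_right)
    finally show ?thesis .
  qed
  have cnt_eq: "cnt a c = cnt a ck" if nz: "X (e, c) \<noteq> 0" and a: "a \<in> {1..N}" for e c a
  proof -
    have "\<forall>m\<in>{1..N}. (\<Sum>r\<in>{1..m}. (of_nat (cnt r c) :: complex)) = (\<Sum>r\<in>{1..m}. of_nat (cnt r ck))"
    proof
      fix m assume m: "m \<in> {1..N}"
      obtain ev where ev: "Aser n N \<beta> m (Suc 0) X = vscale ev X" using eig m by blast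
      have kkp: "kk = (fst kk, ck)" by (simp add: ck_def)
      have "(\<Sum>r\<in>{1..m}. of_nat (cnt r ck)) * X kk = ev * X kk"
        using Aev[OF m, of "fst kk" ck] ev kkp by (simp add: vscale_def) (metis)
      then have 1: "(\<Sum>r\<in>{1..m}. (of_nat (cnt r ck) :: complex)) = ev" using X1 by simp
      have "(\<Sum>r\<in>{1..m}. of_nat (cnt r c)) * X (e, c) = ev * X (e, c)"
        using Aev[OF m, of e c] ev by (simp add: vscale_def) (metis)
      then have "(\<Sum>r\<in>{1..m}. (of_nat (cnt r c) :: complex)) = ev" using nz by simp
      then show "(\<Sum>r\<in>{1..m}. (of_nat (cnt r c) :: complex)) = (\<Sum>r\<in>{1..m}. of_nat (cnt r ck))"
        using 1 by simp
    qed
    from cnt_from_partial[OF this a] show ?thesis by simp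
  qed
  have cnt_ck: "cnt a ck = card {i. i < n \<and> nat (under N (k ! i)) = a}" for a
    unfolding cnt_def by (rule arg_cong[where f = card]) (auto simp: ck_nth)
  have part1: "\<forall>a\<in>{1..N}. Tser n N \<beta> a a 1 X
            = vscale (of_nat (card {i. i < n \<and> nat (under N (k ! i)) = a})) X"
  proof
    fix a assume a: "a \<in> {1..N}"
    show "Tser n N \<beta> a a 1 X = vscale (of_nat (card {i. i < n \<and> nat (under N (k ! i)) = a})) X"
    proof (rule ext)
      fix x :: key
      obtain e c where x: "x = (e, c)" by (cases x)
      have "Tser n N \<beta> a a 1 X (e, c) = of_nat (cnt a c) * X (e, c)"
        using Tser_diag[OF a n1, of \<beta> X e c] by (simp add: cnt_def)
      also have "\<dots> = of_nat (cnt a ck) * X (e, c)"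
        using cnt_eq[of e c a] a by (cases "X (e, c) = 0") auto
      finally show "Tser n N \<beta> a a 1 X x = vscale (of_nat (card {i. i < n \<and> nat (under N (k ! i)) = a})) X x"
        unfolding x cnt_ck vscale_def .
    qed
  qed
  have part2: "Dop n X = vscale (of_int (\<Sum>i<n. over N (k ! i))) X"
  proof (rule ext)
    fix x :: key
    obtain e c where x: "x = (e, c)" by (cases x)
    have D: "Dop n X (e, c) = of_int (\<Sum>i<n. e ! i) * X (e, c)"
      by (simp add: Dop_def zdop_def sum_distrib_right)
    show "Dop n X x = vscale (of_int (\<Sum>i<n. over N (k ! i))) X x"
    proof (cases "X (e, c) = 0")
      case True
      then show ?thesis using D x by (simp add: vscale_def)
    next
      case False
      then obtain l w where l: "length l = n" "sum_list l = sum_list k" and w: "w permutes {..<n}"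
        and ec: "(e, c) = keyof n N l w" using supp by blast
      have e: "e ! i = over N (l ! w i)" and c: "c ! i = nat (under N (l ! w i))" if "i < n" for i
        using ec that by (simp_all add: keyof_def)
      have esum: "(\<Sum>i<n. e ! i) = (\<Sum>i<n. over N (l ! i))"
      proof -
        have "(\<Sum>i<n. e ! i) = (\<Sum>i<n. over N (l ! w i))" using e by simp
        also have "\<dots> = (\<Sum>i<n. over N (l ! i))"
          using sum.permute[OF w, of "\<lambda>i. over N (l ! i)"] by (simp add: comp_def)
        finally show ?thesis .
      qed
      have gen: "int N * (\<Sum>i<n. over N (m ! i)) = (\<Sum>i<n. under N (m ! i)) - (\<Sum>i<n. m ! i)" for m
      proof -
        have "(\<Sum>i<n. m ! i) = (\<Sum>i<n. under N (m ! i) - int N * over N (m ! i))"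
          using under_over[OF N1] by simp
        then show ?thesis by (simp add: sum_subtractf sum_distrib_left)
      qed
      have s1: "(\<Sum>i<n. l ! i) = (\<Sum>i<n. k ! i)"
        using l lenk by (simp add: sum_list_sum_nth atLeast0LessThan)
      have s2: "(\<Sum>i<n. under N (l ! i)) = (\<Sum>i<n. under N (k ! i))"
      proof -
        have "(\<Sum>i<n. under N (l ! i)) = (\<Sum>i<n. under N (l ! w i))"
          using sum.permute[OF w, of "\<lambda>i. under N (l ! i)"] by (simp add: comp_def)
        also have "\<dots> = (\<Sum>i<n. int (c ! i))"
          using c nat_under[OF N1] by simp
        also have "\<dots> = int (\<Sum>i<n. c ! i)" by simp
        also have "(\<Sum>i<n. c ! i) = (\<Sum>a\<in>{1..N}. a * cnt a c)"
          unfolding cnt_def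
        proof (rule count_sum, intro allI impI)
          fix i assume "i < n"
          then show "c ! i \<in> {1..N}" using c under_range[OF N1, of "l ! w i"] by auto
        qed
        also have "\<dots> = (\<Sum>a\<in>{1..N}. a * cnt a ck)"
          using cnt_eq[OF False] by simp
        also have "\<dots> = (\<Sum>i<n. ck ! i)"
          unfolding cnt_def
        proof (rule count_sum[symmetric], intro allI impI)
          fix i assume "i < n"
          then show "ck ! i \<in> {1..N}" using ck_nth under_range[OF N1, of "k ! i"] by auto
        qed
        also have "int (\<Sum>i<n. ck ! i) = (\<Sum>i<n. under N (k ! i))"
          using ck_nth nat_under[OF N1] by simp
        finally show ?thesis .
      qed
      have "int N * (\<Sum>i<n. over N (l ! i)) = int N * (\<Sum>i<n. over N (k ! i))"
        unfolding gen s1 s2 ..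
      then have "(\<Sum>i<n. over N (l ! i)) = (\<Sum>i<n. over N (k ! i))" using N1 by simp
      then show ?thesis using D x esum by (simp add: vscale_def)
    qed
  qed
  show ?thesis using part1 part2 by blast
qed


end
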